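(* Assume that $\bar r^j \in \mathrm{recc}(C)$ for every $j \in N_0$. Then every $x \in P^B \setminus C$ satisfies at least one of the two inequalities $$\sum_{j \in N} \frac{x_j}{\alpha_j} \le 1 \qquad\text{or}\qquad \sum_{j \in N} \frac{x_j}{\beta_j} \ge 1 .$$
   Context: Let $A\in\mathbb{R}^{m\times n}$ have full row rank, $b\in\mathbb{R}^m$, and $P=\{x\in\mathbb{R}^n_+ : Ax=b\}$. Let $C\subseteq\mathbb{R}^n$ be an open convex set. Fix a basis $B\subseteq\{1,\dots,n\}$ of $P$ with nonbasic index set $N=\{1,\dots,n\}\setminus B$. Write $P=\{x\in\mathbb{R}^n : x_i=\bar b_i-\sum_{j\in N}\bar a_{ij}x_j\ (i\in B),\ x_j\ge 0\ (j=1,\dots,n)\}$ for some $\bar a\in\mathbb{R}^{|B|\times|N|}$ and $\bar b\in\mathbb{R}^{|B|}_+$. The basic solution $\bar x$ is given by $\bar x_i=\bar b_i$ for $i\in B$ and $\bar x_i=0$ for $i\in N$. The set $P^B\supseteq P$ is obtained from this description by dropping the constraints $x_i\ge0$ for $i\in B$. For $j\in N$ let $\bar r^j\in\mathbb{R}^n$ be given by $\bar r^j_k=-\bar a_{kj}$ for $k\in B$, $\bar r^j_j=1$, and $\bar r^j_k=0$ for $k\in N\setminus\{j\}$. Then $P^B=\{\bar x+\sum_{j\in N}x_j\bar r^j : x_j\ge 0\ \forall j\in N\}$. For $x\in P^B$, the coordinates $x_j$ ($j\in N$) are exactly the coefficients in this representation. It is assumed that $\bar x\notin\mathrm{cl}(C)$.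 For $j\in N$ let $\alpha_j=\inf\{\lambda\ge0:\bar x+\lambda\bar r^j\in C\}$ and $\beta_j=\sup\{\lambda\ge0:\bar x+\lambda\bar r^j\in C\}$. By convention, $\alpha_j=+\infty$ and $\beta_j=-\infty$ if the halfline $\{\bar x+\lambda\bar r^j:\lambda\ge0\}$ does not intersect $C$. The set $N$ is partitioned into - $N_0=\{j\in N:\alpha_j=+\infty,\ \beta_j=-\infty\}$, - $N_1=\{j\in N:\alpha_j\in(0,+\infty),\ \beta_j=+\infty\}$, - $N_2=\{j\in N:\alpha_j\in(0,+\infty),\ \beta_j\in(\alpha_j,+\infty)\}$. We use the convention $t/\pm\infty=0$. For a set $K\subseteq\mathbb{R}^n$, $\mathrm{recc}(K)=\{d\in\mathbb{R}^n: x+\lambda d\in K\ \forall x\in K,\ \forall\lambda\ge0\}$ denotes its recession cone. *)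

theory Defs
  imports "HOL-Analysis.Analysis"
begin

text \<open>Coordinates are indexed by a finite type 'n (playing the role of {1..n});
  rows of A by a finite type 'm. The basis B is a set of indices, N = UNIV - B.\<close>

definition Pset :: "real^'n^'m \<Rightarrow> real^'m \<Rightarrow> (real^'n) set" where
  "Pset A b = {x. A *v x = b \<and> (\<forall>j. 0 \<le> x $ j)}"

definition is_basis :: "real^'n^'m \<Rightarrow> 'n set \<Rightarrow> bool" where
  "is_basis A B \<longleftrightarrow> card B = CARD('m) \<and> inj_on (\<lambda>j. column j A) B
      \<and> independent ((\<lambda>j. column j A) ` B)"

definition basic_sol :: "'n set \<Rightarrow> ('n \<Rightarrow> real) \<Rightarrow> real^'n" where
  "basic_sol B bb = (\<chi> i. if i \<in> B then bb i else 0)"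

definition ray :: "'n set \<Rightarrow> ('n \<Rightarrow> 'n \<Rightarrow> real) \<Rightarrow> 'n \<Rightarrow> real^'n" where
  "ray B ab j = (\<chi> k. if k \<in> B then - ab k j else if k = j then 1 else 0)"

definition PB :: "'n set \<Rightarrow> ('n \<Rightarrow> 'n \<Rightarrow> real) \<Rightarrow> ('n \<Rightarrow> real) \<Rightarrow> (real^'n) set" where
  "PB B ab bb = {x. (\<forall>i\<in>B. x $ i = bb i - (\<Sum>j\<in>UNIV - B. ab i j * x $ j))
                   \<and> (\<forall>j\<in>UNIV - B. 0 \<le> x $ j)}"

text \<open>alpha = inf, beta = sup of the step lengths along the ray that land in C;
  in ereal, Inf {} = +infinity and Sup {} = -infinity, matching the convention.\<close>

definition alpha :: "(real^'n) set \<Rightarrow> real^'n \<Rightarrow> real^'n \<Rightarrow> ereal" where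
  "alpha C x0 r = Inf (ereal ` {l. 0 \<le> l \<and> x0 + l *\<^sub>R r \<in> C})"

definition beta :: "(real^'n) set \<Rightarrow> real^'n \<Rightarrow> real^'n \<Rightarrow> ereal" where
  "beta C x0 r = Sup (ereal ` {l. 0 \<le> l \<and> x0 + l *\<^sub>R r \<in> C})"

definition ediv :: "real \<Rightarrow> ereal \<Rightarrow> real" where
  "ediv t a = (if \<bar>a\<bar> = \<infinity> then 0 else t / real_of_ereal a)"

definition recc :: "(real^'n) set \<Rightarrow> (real^'n) set" where
  "recc K = {d. \<forall>x\<in>K. \<forall>l\<ge>0. x + l *\<^sub>R d \<in> K}"

end

theory Submission
  imports Defs
begin

lemma seg_in:
  fixes C :: "(real^'n) set"
  assumes "convex C" "x0 + l1 *\<^sub>R r \<in> C" "x0 + l2 *\<^sub>R r \<in> C" "l1 \<le> l" "l \<le> l2"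
  shows "x0 + l *\<^sub>R r \<in> C"
proof (cases "l1 = l2")
  case True then show ?thesis using assms by auto
next
  case False
  define u where "u = (l - l1) / (l2 - l1)"
  have u0: "0 \<le> u" "u \<le> 1" using assms False by (auto simp: u_def field_simps)
  have nz: "l2 - l1 \<noteq> 0" using False by simp
  have e1: "(1-u)*l1 + u*l2 = l1 + u*(l2-l1)" by (simp add: algebra_simps)
  have e2: "u*(l2-l1) = l - l1" using nz by (simp add: u_def)
  have eq: "(1-u)*l1 + u*l2 = l" using e1 e2 by simp
  have "(1-u) *\<^sub>R (x0 + l1 *\<^sub>R r) + u *\<^sub>R (x0 + l2 *\<^sub>R r) = x0 + ((1-u)*l1 + u*l2) *\<^sub>R r"
    by (simp add: algebra_simps)
  moreover have "(1-u) *\<^sub>R (x0 + l1 *\<^sub>R r) + u *\<^sub>R (x0 + l2 *\<^sub>R r) \<in> C"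
    using assms(1-3) u0 by (intro convexD) auto
  ultimately show ?thesis using eq by simp
qed

lemma ray_facts:
  fixes C :: "(real^'n) set"
  assumes "open C" "convex C" "x0 \<notin> closure C" "r \<noteq> 0"
    and S: "S = {l. 0 \<le> l \<and> x0 + l *\<^sub>R r \<in> C}" and ne: "S \<noteq> {}"
  shows "\<exists>a. Inf (ereal ` S) = ereal a \<and> a > 0 \<and> Inf (ereal ` S) < Sup (ereal ` S)
     \<and> (\<forall>l. ereal a < ereal l \<and> ereal l < Sup (ereal ` S) \<longrightarrow> x0 + l *\<^sub>R r \<in> C)"
proof -
  obtain e where e: "e > 0" "\<forall>y\<in>C. e \<le> dist y x0"
    using assms(3) unfolding closure_approachable by (auto simp: not_less)
  have rpos: "norm r > 0" using assms(4) by simp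
  define c where "c = e / norm r"
  have cpos: "c > 0" using e rpos by (simp add: c_def)
  have lb: "c \<le> l" if "l \<in> S" for l
  proof -
    have "e \<le> dist (x0 + l *\<^sub>R r) x0" using e that S by auto
    also have "\<dots> = l * norm r" using that S by (simp add: dist_norm)
    finally show ?thesis using rpos by (simp add: c_def field_simps)
  qed
  obtain l0 where l0: "l0 \<in> S" using ne by auto
  have i1: "ereal c \<le> Inf (ereal ` S)" using lb by (auto intro!: Inf_greatest)
  have i2: "Inf (ereal ` S) \<le> ereal l0" using l0 by (auto intro!: Inf_lower)
  obtain a where a: "Inf (ereal ` S) = ereal a" using i1 i2
    by (cases "Inf (ereal ` S)") auto
  have apos: "a > 0" using i1 a cpos by auto
  have p: "x0 + l0 *\<^sub>R r \<in> C" "0 \<le> l0" using l0 S by auto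
  obtain e2 where e2: "e2 > 0" "ball (x0 + l0 *\<^sub>R r) e2 \<subseteq> C"
    using assms(1) p(1) open_contains_ball by blast
  define d where "d = e2 / (2 * norm r)"
  have dpos: "d > 0" using e2 rpos by (simp add: d_def)
  have "x0 + (l0 + d) *\<^sub>R r \<in> ball (x0 + l0 *\<^sub>R r) e2"
    using e2 rpos dpos by (simp add: dist_norm algebra_simps d_def)
  then have "l0 + d \<in> S" using e2 p dpos S by auto
  then have "ereal (l0 + d) \<le> Sup (ereal ` S)" by (auto intro!: Sup_upper)
  moreover have "ereal l0 < ereal (l0 + d)" using dpos by simp
  ultimately have lt: "Inf (ereal ` S) < Sup (ereal ` S)" using i2
    by (meson order_le_less_trans order_less_le_trans)
  have iv: "x0 + l *\<^sub>R r \<in> C" if h: "ereal a < ereal l" "ereal l < Sup (ereal ` S)" for l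
  proof -
    obtain l1 where l1: "l1 \<in> S" "ereal l1 < ereal l" using h(1) a[symmetric]
      by (metis (no_types, lifting) Inf_less_iff imageE)
    obtain l2 where l2: "l2 \<in> S" "ereal l < ereal l2" using h(2)
      by (metis (no_types, lifting) less_Sup_iff imageE)
    show ?thesis using seg_in[OF assms(2), of x0 l1 r l2 l] l1 l2 S by auto
  qed
  show ?thesis using a apos lt iv by blast
qed

lemma jlemma:
  assumes "al = ereal A" "A > 0" "al < be" "\<forall>l. al < ereal l \<and> ereal l < be \<longrightarrow> P l" "t > 0"
  shows "0 \<le> ediv t be \<and> ediv t be < ediv t al \<and> (\<forall>m. ediv t be < m \<and> m < ediv t al \<longrightarrow> P (t/m))"
proof (cases be)
  case (real Bv)
  have AB: "A < Bv" using assms real by auto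
  have ea: "ediv t al = t / A" "ediv t be = t / Bv" using assms real by (auto simp: ediv_def)
  have "t / Bv < t / A" using AB assms by (simp add: frac_less2)
  moreover have "P (t/m)" if "t / Bv < m" "m < t / A" for m
  proof -
    have mpos: "m > 0" using that assms AB by (smt (verit) divide_pos_pos)
    have "A < t/m" using that mpos assms by (simp add: field_simps)
    moreover have "t/m < Bv" using that mpos assms AB by (simp add: field_simps)
    ultimately show ?thesis using assms real by auto
  qed
  ultimately show ?thesis using ea assms AB by auto
next
  case PInf
  have ea: "ediv t al = t / A" "ediv t be = 0" using assms PInf by (auto simp: ediv_def)
  have "P (t/m)" if "0 < m" "m < t / A" for m
  proof -
    have "A < t/m" using that assms by (simp add: field_simps)
    then show ?thesis using assms PInf by auto
  qed
  then show ?thesis using ea assms by auto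
next
  case MInf then show ?thesis using assms by auto
qed

lemma recc_sum:
  fixes C :: "(real^'n) set"
  assumes "finite F" "z \<in> C" "\<forall>j\<in>F. 0 \<le> c j \<and> d j \<in> recc C"
  shows "z + (\<Sum>j\<in>F. c j *\<^sub>R d j) \<in> C"
  using assms
proof (induction F rule: finite_induct)
  case empty then show ?case by simp
next
  case (insert i F)
  have "z + (\<Sum>j\<in>F. c j *\<^sub>R d j) \<in> C" using insert by auto
  then have "(z + (\<Sum>j\<in>F. c j *\<^sub>R d j)) + c i *\<^sub>R d i \<in> C"
    using insert.prems by (auto simp: recc_def)
  then show ?case using insert by (simp add: algebra_simps)
qed

theorem theorem1:
  fixes A :: "real^'n^'m" and b :: "real^'m" and C :: "(real^'n) set"
    and B :: "'n set" and ab :: "'n \<Rightarrow> 'n \<Rightarrow> real" and bb :: "'n \<Rightarrow> real"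
  assumes full_rank: "rank A = CARD('m)"
    and C_open: "open C" and C_convex: "convex C"
    and basis: "is_basis A B"
    and bb_nonneg: "\<forall>i\<in>B. 0 \<le> bb i"
    and P_descr: "Pset A b = {x. (\<forall>i\<in>B. x $ i = bb i - (\<Sum>j\<in>UNIV - B. ab i j * x $ j))
                                \<and> (\<forall>j. 0 \<le> x $ j)}"
    and xbar_notin: "basic_sol B bb \<notin> closure C"
    and N0_recc: "\<forall>j\<in>UNIV - B.
          alpha C (basic_sol B bb) (ray B ab j) = \<infinity> \<and> beta C (basic_sol B bb) (ray B ab j) = - \<infinity>
          \<longrightarrow> ray B ab j \<in> recc C"
  shows "\<forall>x \<in> PB B ab bb - C.
           (\<Sum>j\<in>UNIV - B. ediv (x $ j) (alpha C (basic_sol B bb) (ray B ab j))) \<le> 1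
         \<or> (\<Sum>j\<in>UNIV - B. ediv (x $ j) (beta C (basic_sol B bb) (ray B ab j))) \<ge> 1"
proof (intro ballI)
  fix x assume xin: "x \<in> PB B ab bb - C"
  define x0 where "x0 = basic_sol B bb"
  define r where "r = ray B ab"
  define S where "S j = {l. 0 \<le> l \<and> x0 + l *\<^sub>R r j \<in> C}" for j
  define N where "N = UNIV - B"
  have al: "alpha C x0 (r j) = Inf (ereal ` S j)" for j by (simp add: alpha_def S_def)
  have be: "beta C x0 (r j) = Sup (ereal ` S j)" for j by (simp add: beta_def S_def)
  have rnz: "r j \<noteq> 0" if "j \<in> N" for j
  proof
    assume "r j = 0"
    then have "r j $ j = 0" by simp
    moreover have "r j $ j = 1" using that by (simp add: r_def ray_def N_def)
    ultimately show False by simp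
  qed
  have xge: "\<forall>j\<in>N. 0 \<le> x$j" using xin by (simp add: PB_def N_def)
  have xrep: "x = x0 + (\<Sum>j\<in>N. x$j *\<^sub>R r j)"
  proof (subst vec_eq_iff, intro allI)
    fix k
    show "x $ k = (x0 + (\<Sum>j\<in>N. x$j *\<^sub>R r j)) $ k"
    proof (cases "k \<in> B")
      case True
      have "x $ k = bb k - (\<Sum>j\<in>N. ab k j * x $ j)" using xin True by (simp add: PB_def N_def)
      moreover have "(\<Sum>j\<in>N. ab k j * x $ j) = - (\<Sum>j\<in>N. x$j * (r j $ k))"
        using True by (simp add: r_def ray_def sum_negf[symmetric] mult.commute)
      ultimately show ?thesis using True by (simp add: x0_def basic_sol_def)
    next
      case False
      then have kN: "k \<in> N" by (simp add: N_def)
      have "(\<Sum>j\<in>N. x$j * (r j $ k)) = (\<Sum>j\<in>N. if k = j then x $ j else 0)"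
        using False by (intro sum.cong) (auto simp: r_def ray_def N_def)
      also have "\<dots> = x $ k" using kN by simp
      finally show ?thesis using False by (simp add: x0_def basic_sol_def)
    qed
  qed
  have facts: "\<exists>a. Inf (ereal ` S j) = ereal a \<and> a > 0 \<and> Inf (ereal ` S j) < Sup (ereal ` S j)
     \<and> (\<forall>l. ereal a < ereal l \<and> ereal l < Sup (ereal ` S j) \<longrightarrow> x0 + l *\<^sub>R r j \<in> C)"
    if "j \<in> N" "S j \<noteq> {}" for j
    using ray_facts[OF C_open C_convex xbar_notin[folded x0_def] rnz[OF that(1)] S_def that(2)] .
  have emp: "r j \<in> recc C" if "j \<in> N" "S j = {}" for j
  proof -
    have "Inf (ereal ` S j) = \<infinity>" "Sup (ereal ` S j) = - \<infinity>"
      using that(2) by (simp_all add: top_ereal_def bot_ereal_def)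
    then show ?thesis using N0_recc that by (simp add: al be x0_def[symmetric] r_def[symmetric] N_def)
  qed
  show "(\<Sum>j\<in>UNIV - B. ediv (x $ j) (alpha C (basic_sol B bb) (ray B ab j))) \<le> 1
         \<or> (\<Sum>j\<in>UNIV - B. ediv (x $ j) (beta C (basic_sol B bb) (ray B ab j))) \<ge> 1"
  proof (rule ccontr)
    assume neg: "\<not> ?thesis"
    define a where "a j = ediv (x $ j) (Inf (ereal ` S j))" for j
    define bq where "bq j = ediv (x $ j) (Sup (ereal ` S j))" for j
    have s1: "(\<Sum>j\<in>N. a j) > 1" and s2: "(\<Sum>j\<in>N. bq j) < 1"
      using neg by (auto simp: a_def bq_def al be x0_def[symmetric] r_def[symmetric] N_def)
    define J where "J = {j\<in>N. S j \<noteq> {} \<and> 0 < x$j}"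
    define J0 where "J0 = {j\<in>N. S j = {} \<and> 0 < x$j}"
    have fin: "finite J" "finite J0" "finite N" by (auto simp: J_def J0_def)
    have zero_out: "x $ j = 0" if "j \<in> N" "j \<notin> J" "j \<notin> J0" for j
      using that xge by (auto simp: J_def J0_def)
    have az: "a j = 0 \<and> bq j = 0" if "j \<in> N" "j \<notin> J" for j
    proof (cases "S j = {}")
      case True then show ?thesis by (simp add: a_def bq_def ediv_def top_ereal_def bot_ereal_def)
    next
      case False
      then have "x $ j = 0" using that xge by (auto simp: J_def)
      then show ?thesis by (simp add: a_def bq_def ediv_def)
    qed
    have JN: "J \<subseteq> N" "J0 \<subseteq> N" by (auto simp: J_def J0_def)
    have SA: "(\<Sum>j\<in>J. a j) > 1"
      using s1 sum.mono_neutral_right[OF fin(3) JN(1), of a] az by auto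
    have SB: "(\<Sum>j\<in>J. bq j) < 1"
      using s2 sum.mono_neutral_right[OF fin(3) JN(1), of bq] az by auto
    have jf: "0 \<le> bq j \<and> bq j < a j \<and> (\<forall>m. bq j < m \<and> m < a j \<longrightarrow> x0 + (x$j/m) *\<^sub>R r j \<in> C)"
      if "j \<in> J" for j
    proof -
      have jN: "j \<in> N" "S j \<noteq> {}" "0 < x $ j" using that by (auto simp: J_def)
      obtain A where A: "Inf (ereal ` S j) = ereal A" "A > 0" "Inf (ereal ` S j) < Sup (ereal ` S j)"
        "\<forall>l. ereal A < ereal l \<and> ereal l < Sup (ereal ` S j) \<longrightarrow> x0 + l *\<^sub>R r j \<in> C"
        using facts[OF jN(1,2)] by blast
      show ?thesis using jlemma[OF A(1,2,3), of "\<lambda>l. x0 + l *\<^sub>R r j \<in> C" "x $ j"] A(1,4) jN(3)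
        by (simp add: a_def bq_def)
    qed
    define sa where "sa = (\<Sum>j\<in>J. a j)"
    define sb where "sb = (\<Sum>j\<in>J. bq j)"
    define t where "t = (1 - sb) / (sa - sb)"
    have t01: "0 < t" "t < 1" using SA SB by (auto simp: t_def sa_def sb_def field_simps)
    define mu where "mu j = bq j + t * (a j - bq j)" for j
    have musum: "(\<Sum>j\<in>J. mu j) = 1"
    proof -
      have "(\<Sum>j\<in>J. mu j) = sb + t * (sa - sb)"
        by (simp add: mu_def sum.distrib sum_distrib_left[symmetric] sum_subtractf sa_def sb_def)
      also have "\<dots> = 1" using SA SB by (simp add: t_def sa_def sb_def)
      finally show ?thesis .
    qed
    have mub: "bq j < mu j \<and> mu j < a j" if "j \<in> J" for j
    proof -
      have "bq j < a j" using jf[OF that] by simp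
      then have d1: "0 < t * (a j - bq j)" using t01 by simp
      have d2: "t * (a j - bq j) < 1 * (a j - bq j)"
        using t01 \<open>bq j < a j\<close> by (intro mult_strict_right_mono) auto
      show ?thesis using d1 d2 by (simp add: mu_def)
    qed
    have mupos: "0 < mu j" if "j \<in> J" for j using mub[OF that] jf[OF that] by linarith
    define p where "p j = x0 + (x$j / mu j) *\<^sub>R r j" for j
    have pC: "p j \<in> C" if "j \<in> J" for j
      using jf[OF that] mub[OF that] by (simp add: p_def)
    have yC: "(\<Sum>j\<in>J. mu j *\<^sub>R p j) \<in> C"
      using convex_sum[OF fin(1) C_convex musum] mupos pC by (simp add: less_imp_le)
    have yeq: "(\<Sum>j\<in>J. mu j *\<^sub>R p j) = x0 + (\<Sum>j\<in>J. x$j *\<^sub>R r j)"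
    proof -
      have "(\<Sum>j\<in>J. mu j *\<^sub>R p j) = (\<Sum>j\<in>J. mu j *\<^sub>R x0 + x$j *\<^sub>R r j)"
        using mupos by (intro sum.cong) (auto simp: p_def scaleR_add_right dest!: mupos)
      also have "\<dots> = (\<Sum>j\<in>J. mu j) *\<^sub>R x0 + (\<Sum>j\<in>J. x$j *\<^sub>R r j)"
        by (simp add: sum.distrib scaleR_sum_left)
      finally show ?thesis using musum by simp
    qed
    have "x0 + (\<Sum>j\<in>J. x$j *\<^sub>R r j) + (\<Sum>j\<in>J0. x$j *\<^sub>R r j) \<in> C"
      using recc_sum[OF fin(2), of "x0 + (\<Sum>j\<in>J. x$j *\<^sub>R r j)" C "\<lambda>j. x$j" r] yC yeq emp xge
      by (auto simp: J0_def)
    moreover have "(\<Sum>j\<in>N. x$j *\<^sub>R r j) = (\<Sum>j\<in>J. x$j *\<^sub>R r j) + (\<Sum>j\<in>J0. x$j *\<^sub>R r j)"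
    proof -
      have "(\<Sum>j\<in>N. x$j *\<^sub>R r j) = (\<Sum>j\<in>J \<union> J0. x$j *\<^sub>R r j)"
      proof (rule sum.mono_neutral_right[OF fin(3)])
        show "J \<union> J0 \<subseteq> N" using JN by auto
        show "\<forall>i\<in>N - (J \<union> J0). x $ i *\<^sub>R r i = 0" using zero_out by auto
      qed
      also have "\<dots> = (\<Sum>j\<in>J. x$j *\<^sub>R r j) + (\<Sum>j\<in>J0. x$j *\<^sub>R r j)"
        using fin by (intro sum.union_disjoint) (auto simp: J_def J0_def)
      finally show ?thesis .
    qed
    ultimately have "x \<in> C" using xrep by (simp add: add.assoc)
    then show False using xin by simp
  qed
qed

end
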